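(* Let $m, n$ be positive integers with $m \mid n$, let $N < 2^n$ be a positive integer, and let $x < 2^m$ be an odd positive integer. Let $x_{\mathrm{minv}}$ be the inverse of $x$ modulo $2^m$. Define $z_0 = 0$ and, for $j = 0, 1, \ldots, \frac{n-2m}{m}$: $N_j = \lfloor N/2^{jm}\rfloor \bmod 2^m$; $\mathsf{ctrl}_j = \big[x_{\mathrm{minv}}\,(N_j - z_j)\big] \bmod 2^m \in [0, 2^m-1]$; $z'_j = z_j + \mathsf{ctrl}_j \cdot x$; and $z_{j+1} = \lfloor z'_j / 2^m\rfloor$. For $j = 0, 1, \ldots, \frac{n-m}{m}$ let $y_j = z_j\cdot 2^{jm} + (N \bmod 2^{jm})$. Then for all $j = 0, 1, \ldots, \frac{n-m}{m}$: (1) $y_j \equiv N \pmod{2^{jm}}$; (2) $0 \le y_j < 2^{jm}\cdot x$; (3) $y_j$ is divisible by $x$. *)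

theory Defs
  imports Main "HOL-Number_Theory.Cong"
begin

definition digit :: "nat \<Rightarrow> int \<Rightarrow> nat \<Rightarrow> int" where
  "digit m N j = (N div 2 ^ (j * m)) mod 2 ^ m"

fun zseq :: "nat \<Rightarrow> int \<Rightarrow> int \<Rightarrow> int \<Rightarrow> nat \<Rightarrow> int" where
  "zseq m N x xminv 0 = 0"
| "zseq m N x xminv (Suc j) =
     (let zj = zseq m N x xminv j;
          ctrl = (xminv * (digit m N j - zj)) mod 2 ^ m
      in (zj + ctrl * x) div 2 ^ m)"

definition ctrl :: "nat \<Rightarrow> int \<Rightarrow> int \<Rightarrow> int \<Rightarrow> nat \<Rightarrow> int" where
  "ctrl m N x xminv j = (xminv * (digit m N j - zseq m N x xminv j)) mod 2 ^ m"

definition yval :: "nat \<Rightarrow> int \<Rightarrow> int \<Rightarrow> int \<Rightarrow> nat \<Rightarrow> int" where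
  "yval m N x xminv j = zseq m N x xminv j * 2 ^ (j * m) + N mod 2 ^ (j * m)"

end

theory Submission
  imports Defs
begin

lemma step_mod:
  fixes m :: nat and N x xminv z :: int
  assumes "[x * xminv = 1] (mod 2 ^ m)"
  shows "(z + ((xminv * (digit m N j - z)) mod 2 ^ m) * x) mod 2 ^ m = digit m N j"
proof -
  let ?d = "digit m N j"
  have "[z + ((xminv * (?d - z)) mod 2 ^ m) * x = z + (xminv * (?d - z)) * x] (mod 2 ^ m)"
    by (intro cong_add cong_refl cong_mult) (simp add: cong_def)
  moreover have "[z + (xminv * (?d - z)) * x = z + (?d - z) * 1] (mod 2 ^ m)"
  proof -
    have "[(?d - z) * (x * xminv) = (?d - z) * 1] (mod 2 ^ m)"
      by (intro cong_mult cong_refl assms)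
    then show ?thesis by (intro cong_add cong_refl) (simp add: ac_simps)
  qed
  ultimately have "[z + ((xminv * (?d - z)) mod 2 ^ m) * x = ?d] (mod 2 ^ m)"
    by (metis (no_types, lifting) add_diff_cancel_left' cong_trans diff_add_cancel mult_1_right)
  moreover have "?d mod 2 ^ m = ?d" unfolding digit_def by simp
  ultimately show ?thesis by (simp add: cong_def)
qed

lemma yval_step:
  fixes m :: nat and N x xminv :: int
  assumes "[x * xminv = 1] (mod 2 ^ m)"
  shows "yval m N x xminv (Suc j) = yval m N x xminv j + ctrl m N x xminv j * x * 2 ^ (j * m)"
proof -
  let ?z = "zseq m N x xminv j"
  let ?c = "ctrl m N x xminv j"
  let ?zp = "?z + ?c * x"
  have zs: "zseq m N x xminv (Suc j) = ?zp div 2 ^ m"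
    by (simp add: ctrl_def Let_def)
  have md: "?zp mod 2 ^ m = digit m N j"
    unfolding ctrl_def by (rule step_mod[OF assms])
  have dec: "2 ^ m * (?zp div 2 ^ m) + digit m N j = ?zp"
    unfolding md[symmetric] by (rule mult_div_mod_eq)
  have pw: "(2::int) ^ (Suc j * m) = 2 ^ (j * m) * 2 ^ m"
    by (simp add: power_add)
  have nm: "N mod (2 ^ (j * m) * 2 ^ m) = 2 ^ (j * m) * digit m N j + N mod 2 ^ (j * m)"
  proof -
    have "N mod (2^(j*m) * 2^m) = 2^(j*m) * (N div 2^(j*m) mod 2^m) + N mod 2^(j*m)"
      by (rule zmod_zmult2_eq) simp
    then show ?thesis unfolding digit_def .
  qed
  have "yval m N x xminv (Suc j) = (?zp div 2 ^ m) * (2 ^ (j * m) * 2 ^ m)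
          + 2 ^ (j * m) * digit m N j + N mod 2 ^ (j * m)"
    unfolding yval_def zs pw nm by (rule add.assoc[symmetric])
  also have "\<dots> = 2 ^ (j * m) * (2 ^ m * (?zp div 2 ^ m) + digit m N j) + N mod 2 ^ (j * m)"
    by (simp add: algebra_simps)
  also have "\<dots> = 2 ^ (j * m) * ?zp + N mod 2 ^ (j * m)"
    by (simp only: dec)
  also have "\<dots> = yval m N x xminv j + ctrl m N x xminv j * x * 2 ^ (j * m)"
    unfolding yval_def by (simp only: distrib_left mult.commute mult.left_commute add.commute add.left_commute)
  finally show ?thesis .
qed

lemma inv_all:
  fixes m :: nat and N x xminv :: int
  assumes "0 < x" and "[x * xminv = 1] (mod 2 ^ m)"
  shows "0 \<le> zseq m N x xminv j \<and> zseq m N x xminv j < x \<and> x dvd yval m N x xminv j"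
proof (induction j)
  case 0
  then show ?case using assms by (simp add: yval_def)
next
  case (Suc j)
  let ?z = "zseq m N x xminv j"
  let ?c = "ctrl m N x xminv j"
  have zs: "zseq m N x xminv (Suc j) = (?z + ?c * x) div 2 ^ m"
    by (simp add: ctrl_def Let_def)
  have c0: "0 \<le> ?c" and c1: "?c \<le> 2 ^ m - 1" unfolding ctrl_def by auto
  have "?c * x \<le> (2 ^ m - 1) * x" using c1 assms(1) by (simp add: mult_right_mono)
  hence lt: "?z + ?c * x < 2 ^ m * x" using Suc.IH by (simp add: algebra_simps)
  have ge: "0 \<le> ?z + ?c * x" using Suc.IH c0 assms(1) by simp
  have a: "0 \<le> zseq m N x xminv (Suc j)" unfolding zs using ge by (simp add: pos_imp_zdiv_nonneg_iff)
  have q: "2 ^ m * ((?z + ?c * x) div 2 ^ m) \<le> ?z + ?c * x"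
  proof -
    have "0 \<le> (?z + ?c * x) mod 2 ^ m" by simp
    moreover have "2 ^ m * ((?z + ?c * x) div 2 ^ m) + (?z + ?c * x) mod 2 ^ m = ?z + ?c * x"
      by (rule mult_div_mod_eq)
    ultimately show ?thesis by linarith
  qed
  have b: "zseq m N x xminv (Suc j) < x" unfolding zs
  proof (rule ccontr)
    assume "\<not> (?z + ?c * x) div 2 ^ m < x"
    hence "2 ^ m * x \<le> 2 ^ m * ((?z + ?c * x) div 2 ^ m)" by simp
    with q lt show False by simp
  qed
  have "x dvd yval m N x xminv (Suc j)"
    unfolding yval_step[OF assms(2)] using Suc.IH by simp
  then show ?case using a b by simp
qed

theorem lemma4p3:
  fixes m n :: nat and N x xminv :: int
  assumes "0 < m" and "0 < n" and "m dvd n"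
    and "0 < N" and "N < 2 ^ n"
    and "0 < x" and "x < 2 ^ m" and "odd x"
    and "0 \<le> xminv" and "xminv < 2 ^ m" and "[x * xminv = 1] (mod 2 ^ m)"
  shows "\<forall>j \<le> (n - m) div m.
           [yval m N x xminv j = N] (mod 2 ^ (j * m)) \<and>
           0 \<le> yval m N x xminv j \<and> yval m N x xminv j < 2 ^ (j * m) * x \<and>
           x dvd yval m N x xminv j"
proof (intro allI impI)
  fix j
  have I: "0 \<le> zseq m N x xminv j" "zseq m N x xminv j < x" "x dvd yval m N x xminv j"
    using inv_all[OF assms(6) assms(11)] by auto
  have c1: "[yval m N x xminv j = N] (mod 2 ^ (j * m))"
    unfolding yval_def cong_def by simp
  have c2: "0 \<le> yval m N x xminv j" unfolding yval_def using I by simp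
  have "zseq m N x xminv j + 1 \<le> x" using I by simp
  hence "zseq m N x xminv j * 2 ^ (j * m) + 2 ^ (j * m) \<le> x * 2 ^ (j * m)"
    by (metis distrib_right mult_1 mult_right_mono zero_le_numeral zero_le_power)
  moreover have "N mod 2 ^ (j * m) < 2 ^ (j * m)" by simp
  ultimately have "zseq m N x xminv j * 2 ^ (j * m) + N mod 2 ^ (j * m) < x * 2 ^ (j * m)"
    by linarith
  then have c3: "yval m N x xminv j < 2 ^ (j * m) * x"
    unfolding yval_def by (simp add: mult.commute)
  show "[yval m N x xminv j = N] (mod 2 ^ (j * m)) \<and>
           0 \<le> yval m N x xminv j \<and> yval m N x xminv j < 2 ^ (j * m) * x \<and>
           x dvd yval m N x xminv j" using c1 c2 c3 I by simp
qed

end
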